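(* Let $s,t,n$ be positive integers with $1\le s\le t\le n$ and $s\mid n$. Then \[ \bigl|\overline{\mathcal{R}}(s,t,n)\bigr|\;\le\;\bigl|\mathcal{R}(s,t,n)\bigr|\;\le\;(t-s)!\cdot\left(\frac{t!}{(t-s)!}\right)^{n/s}. \]
   Context: For distinct reals $\mathbf{c}=(c_0,\dots,c_{t-1})$, let $f_{\mathbf{c}}\in S_t$ (the permutations of $\{0,\dots,t-1\}$) be given by $f_{\mathbf{c}}(i)=|\{j: c_j<c_i\}|$. For $\mathbf{c}=(c_0,\dots,c_{n-1})\in\mathbb{R}^n$ with distinct entries and $1\le t\le n$, $0\le p\le n-1$, the window $\mathbf{c}_{p,t}=(c_p,c_{p+1},\dots,c_{p+t-1})$ with indices taken modulo $n$. The $(s,t,n)$-local rank-modulation demodulation maps $\mathbf{c}$ to $\mathbf{f}_{\mathbf{c}}=(f_{\mathbf{c}_{0,t}},f_{\mathbf{c}_{s,t}},f_{\mathbf{c}_{2s,t}},\dots,f_{\mathbf{c}_{n-s,t}})$, a sequence of $n/s$ permutations in $S_t$. $\mathcal{R}(s,t,n)$ is the set of all sequences $\mathbf{f}_{\mathbf{c}}$ obtained this way from some $\mathbf{c}\in\mathbb{R}^n$ with distinct entries. For $f\in S_t$ and position $k\in\{0,\dots,t-1\}$, the factoradic digit of $f$ at position $k$ is $|\{k'>k: f(k')<f(k)\}|$; let $\bar f$ denote the vector of the digits at positions $0,1,\dots,s-1$ (the $s$ most significant factoradic digits). $\overline{\mathcal{R}}(s,t,n)$ is the set of all sequences $(\bar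 f_{\mathbf{c}_{0,t}},\bar f_{\mathbf{c}_{s,t}},\dots,\bar f_{\mathbf{c}_{n-s,t}})$ for $\mathbf{c}\in\mathbb{R}^n$ with distinct entries. *)

theory Defs
  imports Complex_Main
begin

text \<open>A vector c in R^n is a function nat => real, only its values on {0..<n} matter.
  Permutations of {0..<t} are represented as lists [f 0, ..., f (t-1)].\<close>

definition window :: "(nat \<Rightarrow> real) \<Rightarrow> nat \<Rightarrow> nat \<Rightarrow> nat \<Rightarrow> real" where
  "window c n p = (\<lambda>i. c ((p + i) mod n))"

definition rank_perm :: "(nat \<Rightarrow> real) \<Rightarrow> nat \<Rightarrow> nat list" where
  "rank_perm w t = map (\<lambda>i. card {j. j < t \<and> w j < w i}) [0..<t]"

definition factoradic_digit :: "nat list \<Rightarrow> nat \<Rightarrow> nat" where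
  "factoradic_digit f k = card {k'. k < k' \<and> k' < length f \<and> f ! k' < f ! k}"

definition top_digits :: "nat \<Rightarrow> nat list \<Rightarrow> nat list" where
  "top_digits s f = map (factoradic_digit f) [0..<s]"

definition LRM :: "nat \<Rightarrow> nat \<Rightarrow> nat \<Rightarrow> nat list list set" where
  "LRM s t n = {map (\<lambda>m. rank_perm (window c n (m * s)) t) [0..<n div s] | c. inj_on c {..<n}}"

definition LRM_bar :: "nat \<Rightarrow> nat \<Rightarrow> nat \<Rightarrow> nat list list set" where
  "LRM_bar s t n = {map (\<lambda>m. top_digits s (rank_perm (window c n (m * s)) t)) [0..<n div s]
                    | c. inj_on c {..<n}}"

end

theory Submission
  imports Defs
begin

definition rk :: "nat list \<Rightarrow> nat \<Rightarrow> nat" where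
  "rk xs i = card {j. j < length xs \<and> xs ! j < xs ! i}"

definition rkl :: "nat list \<Rightarrow> nat list" where
  "rkl xs = map (rk xs) [0..<length xs]"

definition isperm :: "nat list \<Rightarrow> nat \<Rightarrow> bool" where
  "isperm g t \<longleftrightarrow> length g = t \<and> distinct g \<and> set g = {0..<t}"

lemma card_less_mono:
  fixes S :: "nat set"
  assumes "finite S" "y \<in> S" "x \<in> S" "x < y"
  shows "card {z\<in>S. z < x} < card {z\<in>S. z < y}"
proof (rule psubset_card_mono)
  show "finite {z\<in>S. z < y}" using assms by auto
  show "{z\<in>S. z < x} \<subset> {z\<in>S. z < y}"
    using assms by auto
qed

lemma card_less_inj:
  fixes S :: "nat set"
  assumes "finite S" "x \<in> S" "y \<in> S" "card {z\<in>S. z < x} = card {z\<in>S. z < y}"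
  shows "x = y"
proof (rule ccontr)
  assume "x \<noteq> y"
  then consider "x < y" | "y < x" by linarith
  thus False
    using card_less_mono[OF assms(1) assms(3) assms(2)] card_less_mono[OF assms(1) assms(2) assms(3)] assms(4)
    by cases auto
qed

lemma rk_card:
  assumes "distinct xs" "i < length xs"
  shows "rk xs i = card {y\<in>set xs. y < xs ! i}"
proof -
  have "{y\<in>set xs. y < xs ! i} = nth xs ` {j. j < length xs \<and> xs ! j < xs ! i}"
    by (auto simp: in_set_conv_nth)
  moreover have "inj_on (nth xs) {j. j < length xs \<and> xs ! j < xs ! i}"
    using assms by (intro inj_on_nth) auto
  ultimately show ?thesis unfolding rk_def by (simp add: card_image)
qed

lemma rk_lt:
  assumes "distinct a" "i < length a"
  shows "rk a i < length a"
proof -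
  have sub: "{y\<in>set a. y < a ! i} \<subset> set a"
  proof
    show "{y\<in>set a. y < a ! i} \<subseteq> set a" by blast
    have "a ! i \<in> set a" using assms(2) by (rule nth_mem)
    moreover have "a ! i \<notin> {y\<in>set a. y < a ! i}" by simp
    ultimately show "{y\<in>set a. y < a ! i} \<noteq> set a" by blast
  qed
  have "card {y\<in>set a. y < a ! i} < card (set a)"
    by (rule psubset_card_mono[OF _ sub]) simp
  thus ?thesis using rk_card[OF assms] distinct_card[OF assms(1)] by simp
qed

lemma rk_inj:
  assumes "distinct a" "i < length a" "j < length a" "rk a i = rk a j"
  shows "i = j"
proof -
  have "card {y\<in>set a. y < a ! i} = card {y\<in>set a. y < a ! j}"
    using rk_card[OF assms(1,2)] rk_card[OF assms(1,3)] assms(4) by simp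
  moreover have "a ! i \<in> set a" "a ! j \<in> set a" using assms(2,3) by (auto intro: nth_mem)
  ultimately have "a ! i = a ! j" using card_less_inj[of "set a" "a ! i" "a ! j"] by simp
  thus ?thesis using assms(1,2,3) by (simp add: nth_eq_iff_index_eq)
qed

lemma rkl_props:
  assumes "distinct a"
  shows "length (rkl a) = length a \<and> distinct (rkl a) \<and> set (rkl a) \<subseteq> {0..<length a}"
proof -
  have "inj_on (rk a) {0..<length a}"
    using rk_inj[OF assms] by (auto simp: inj_on_def)
  hence "distinct (rkl a)" unfolding rkl_def by (simp add: distinct_map)
  moreover have "set (rkl a) \<subseteq> {0..<length a}"
    unfolding rkl_def using rk_lt[OF assms] by auto
  ultimately show ?thesis by (simp add: rkl_def)
qed

lemma rkl_eq_imp_eq: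
  assumes "distinct a" "distinct b" "set a = set b" "length a = length b" "rkl a = rkl b"
  shows "a = b"
proof (rule nth_equalityI)
  show "length a = length b" by fact
  fix i assume i: "i < length a"
  have "rkl a ! i = rkl b ! i" using assms(5) by simp
  hence "rk a i = rk b i" using i assms(4) by (simp add: rkl_def)
  hence "card {y\<in>set a. y < a ! i} = card {y\<in>set a. y < b ! i}"
  proof -
    have i2: "i < length b" using i assms(4) by simp
    show ?thesis using rk_card[OF assms(1) i] rk_card[OF assms(2) i2] \<open>rk a i = rk b i\<close>
      unfolding assms(3) by linarith
  qed
  moreover have "a ! i \<in> set a" using i by (rule nth_mem)
  moreover have "b ! i \<in> set a" unfolding assms(3) using i assms(4) by (intro nth_mem) simp
  ultimately show "a ! i = b ! i"
    using card_less_inj[of "set a" "a ! i" "b ! i"] by simp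
qed

lemma reconstruct:
  assumes "isperm g t" "isperm g' t" "rkl (take r g) = rkl (take r g')" "drop r g = drop r g'"
  shows "g = g'"
proof -
  have d: "distinct g" "distinct g'" "set g = set g'" "length g = length g'"
    using assms(1,2) unfolding isperm_def by auto
  have "set (take r g) = set g - set (drop r g)"
    using set_take_disj_set_drop_if_distinct[OF d(1), of r r] set_append[of "take r g" "drop r g"]
    unfolding append_take_drop_id by auto
  moreover have "set (take r g') = set g' - set (drop r g')"
    using set_take_disj_set_drop_if_distinct[OF d(2), of r r] set_append[of "take r g'" "drop r g'"]
    unfolding append_take_drop_id by auto
  ultimately have st: "set (take r g) = set (take r g')"
    using d(3) assms(4) by simp
  have "take r g = take r g'"
  proof (rule rkl_eq_imp_eq)
    show "distinct (take r g)" using d(1) by (rule distinct_take)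
    show "distinct (take r g')" using d(2) by (rule distinct_take)
    show "set (take r g) = set (take r g')" by (rule st)
    show "length (take r g) = length (take r g')" using d(4) by simp
    show "rkl (take r g) = rkl (take r g')" by (rule assms(3))
  qed
  hence "take r g @ drop r g = take r g' @ drop r g'" using assms(4) by simp
  thus ?thesis unfolding append_take_drop_id .
qed


lemma rank_perm_nth:
  "a < t \<Longrightarrow> rank_perm w t ! a = card {j. j < t \<and> w j < w a}"
  by (simp add: rank_perm_def)

lemma rank_perm_cmp:
  assumes "a < t" "b < t"
  shows "rank_perm w t ! a < rank_perm w t ! b \<longleftrightarrow> w a < w b"
proof (cases "w a < w b")
  case True
  have "{j. j < t \<and> w j < w a} \<subset> {j. j < t \<and> w j < w b}"
    using True assms by auto
  hence "card {j. j < t \<and> w j < w a} < card {j. j < t \<and> w j < w b}"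
    by (rule psubset_card_mono[rotated]) simp
  thus ?thesis using True assms by (simp add: rank_perm_nth)
next
  case False
  have "{j. j < t \<and> w j < w b} \<subseteq> {j. j < t \<and> w j < w a}"
    using False by auto
  hence "card {j. j < t \<and> w j < w b} \<le> card {j. j < t \<and> w j < w a}"
    by (rule card_mono[rotated]) simp
  thus ?thesis using False assms by (simp add: rank_perm_nth)
qed

lemma rank_perm_isperm:
  assumes inj: "inj_on w {0..<t}"
  shows "isperm (rank_perm w t) t"
proof -
  let ?g = "rank_perm w t"
  have len: "length ?g = t" by (simp add: rank_perm_def)
  have lt: "?g ! a < t" if "a < t" for a
  proof -
    have "{j. j < t \<and> w j < w a} \<subseteq> {0..<t} - {a}" by auto
    hence "card {j. j < t \<and> w j < w a} \<le> card ({0..<t} - {a})"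
      by (rule card_mono[rotated]) simp
    also have "\<dots> < t" using that by simp
    finally show ?thesis using that by (simp add: rank_perm_nth)
  qed
  have dist: "distinct ?g"
    unfolding distinct_conv_nth
  proof (intro allI impI)
    fix a b assume ab: "a < length ?g" "b < length ?g" "a \<noteq> b"
    hence ab': "a < t" "b < t" using len by auto
    have "w a \<noteq> w b" using inj ab' ab(3) by (auto simp: inj_on_def)
    hence "w a < w b \<or> w b < w a" by linarith
    thus "?g ! a \<noteq> ?g ! b"
      using rank_perm_cmp[OF ab'(1) ab'(2), of w] rank_perm_cmp[OF ab'(2) ab'(1), of w] by auto
  qed
  have sub: "set ?g \<subseteq> {0..<t}"
  proof
    fix x assume "x \<in> set ?g"
    then obtain a where "a < length ?g" "x = ?g ! a" by (auto simp: in_set_conv_nth)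
    thus "x \<in> {0..<t}" using lt len by auto
  qed
  have "card (set ?g) = card {0..<t}" using distinct_card[OF dist] len by simp
  hence "set ?g = {0..<t}" using sub by (intro card_subset_eq) auto
  thus ?thesis using len dist by (simp add: isperm_def)
qed

lemma window_inj:
  assumes "inj_on c {..<n}" "t \<le> n"
  shows "inj_on (window c n p) {0..<t}"
proof (rule inj_onI)
  fix i j assume ij: "i \<in> {0..<t}" "j \<in> {0..<t}" "window c n p i = window c n p j"
  hence n: "n > 0" using assms(2) by auto
  have "(p + i) mod n \<in> {..<n}" "(p + j) mod n \<in> {..<n}" using n by auto
  hence "(p + i) mod n = (p + j) mod n"
    using ij(3) assms(1) unfolding window_def inj_on_def by blast
  hence e: "(p + i) mod n = (p + j) mod n" .
  show "i = j"
  proof (rule ccontr)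
    assume "i \<noteq> j"
    then consider "i < j" | "j < i" by linarith
    thus False
    proof cases
      case 1
      have "n dvd (p + j) - (p + i)" using e 1 by (subst mod_eq_dvd_iff_nat[symmetric]) auto
      hence "n dvd j - i" by simp
      moreover have "0 < j - i" "j - i < n" using 1 ij assms(2) by auto
      ultimately show False by (meson nat_dvd_not_less)
    next
      case 2
      have "n dvd (p + i) - (p + j)" using e 2 by (subst mod_eq_dvd_iff_nat[symmetric]) auto
      hence "n dvd i - j" by simp
      moreover have "0 < i - j" "i - j < n" using 2 ij assms(2) by auto
      ultimately show False by (meson nat_dvd_not_less)
    qed
  qed
qed

lemma rkl_cong:
  assumes "length xs = length ys"
    "\<And>i j. i < length xs \<Longrightarrow> j < length xs \<Longrightarrow> (xs ! j < xs ! i \<longleftrightarrow> ys ! j < ys ! i)"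
  shows "rkl xs = rkl ys"
proof -
  have "rk xs i = rk ys i" if "i < length xs" for i
    unfolding rk_def using assms that by (intro arg_cong[where f=card] Collect_cong) auto
  thus ?thesis unfolding rkl_def using assms(1) by simp
qed

lemma LRM_facts:
  assumes "F \<in> LRM s t n" "s \<le> t" "t \<le> n"
  shows "length F = n div s"
    "\<And>m. m < n div s \<Longrightarrow> isperm (F ! m) t"
    "\<And>m. Suc m < n div s \<Longrightarrow> rkl (take (t - s) (F ! Suc m)) = rkl (drop s (F ! m))"
proof -
  obtain c where c: "inj_on c {..<n}"
    and F: "F = map (\<lambda>m. rank_perm (window c n (m * s)) t) [0..<n div s]"
    using assms(1) unfolding LRM_def by blast
  show "length F = n div s" using F by simp
  show "isperm (F ! m) t" if "m < n div s" for m
    using F that rank_perm_isperm[OF window_inj[OF c assms(3)]] by simp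
  show "rkl (take (t - s) (F ! Suc m)) = rkl (drop s (F ! m))" if m: "Suc m < n div s" for m
  proof -
    define w where "w = window c n (m * s)"
    define w' where "w' = window c n (Suc m * s)"
    have ww: "w' i = w (s + i)" for i
      unfolding w_def w'_def window_def by (simp add: add.assoc add.commute add.left_commute)
    have Fm: "F ! m = rank_perm w t" "F ! Suc m = rank_perm w' t"
      using F m unfolding w_def w'_def by auto
    show ?thesis
    proof (rule rkl_cong)
      show "length (take (t - s) (F ! Suc m)) = length (drop s (F ! m))"
        using Fm by (simp add: rank_perm_def)
      fix i j assume "i < length (take (t - s) (F ! Suc m))" "j < length (take (t - s) (F ! Suc m))"
      hence ij: "i < t - s" "j < t - s" using Fm by (auto simp: rank_perm_def)
      have "take (t - s) (F ! Suc m) ! j < take (t - s) (F ! Suc m) ! i \<longleftrightarrow> w' j < w' i"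
        using ij Fm rank_perm_cmp[of j t i w'] by simp
      also have "\<dots> \<longleftrightarrow> w (s + j) < w (s + i)" by (simp add: ww)
      also have "\<dots> \<longleftrightarrow> drop s (F ! m) ! j < drop s (F ! m) ! i"
      proof -
        have l: "s \<le> length (rank_perm w t)" using assms(2) by (simp add: rank_perm_def)
        have "drop s (F ! m) ! j = rank_perm w t ! (s + j)" "drop s (F ! m) ! i = rank_perm w t ! (s + i)"
          unfolding Fm(1) using l by (simp_all add: nth_drop)
        moreover have "s + j < t" "s + i < t" using ij by auto
        ultimately show ?thesis using rank_perm_cmp[of "s + j" t "s + i" w] by simp
      qed
      finally show "take (t - s) (F ! Suc m) ! j < take (t - s) (F ! Suc m) ! i \<longleftrightarrow>
        drop s (F ! m) ! j < drop s (F ! m) ! i" .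
    qed
  qed
qed


theorem lemma1:
  fixes s t n :: nat
  assumes "1 \<le> s" "s \<le> t" "t \<le> n" "s dvd n"
  shows "card (LRM_bar s t n) \<le> card (LRM s t n) \<and>
         real (card (LRM s t n)) \<le> fact (t - s) * (fact t / fact (t - s)) ^ (n div s)"
proof -
  define k where "k = n div s"
  have kpos: "0 < k" unfolding k_def using assms by (simp add: div_greater_zero_iff)
  define P where "P = {xs. length xs = t - s \<and> distinct xs \<and> set xs \<subseteq> {0..<t-s}}"
  define D where "D = {xs. length xs = s \<and> distinct xs \<and> set xs \<subseteq> {0..<t}}"
  define Q where "Q = {L. set L \<subseteq> D \<and> length L = k}"
  define \<Phi> where "\<Phi> = (\<lambda>F::nat list list. (rkl (take (t - s) (F ! 0)), map (drop (t - s)) F))"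
  note LF = LRM_facts[OF _ assms(2,3)]
  have finD: "finite D"
    by (rule finite_subset[OF _ finite_lists_length_eq[of "{0..<t}" s]]) (auto simp: D_def)
  have finP: "finite P"
    by (rule finite_subset[OF _ finite_lists_length_eq[of "{0..<t-s}" "t-s"]]) (auto simp: P_def)
  have finQ: "finite Q" unfolding Q_def using finite_lists_length_eq[OF finD] .
  have img: "\<Phi> ` LRM s t n \<subseteq> P \<times> Q"
  proof
    fix x assume "x \<in> \<Phi> ` LRM s t n"
    then obtain F where F: "F \<in> LRM s t n" "x = \<Phi> F" by blast
    have len: "length F = k" using LF(1)[OF F(1)] k_def by simp
    have p0: "isperm (F ! 0) t" using LF(2)[OF F(1)] kpos k_def by simp
    have "rkl (take (t - s) (F ! 0)) \<in> P"
    proof -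
      have d: "distinct (take (t - s) (F ! 0))" using p0 by (simp add: isperm_def)
      have l: "length (take (t - s) (F ! 0)) = t - s" using p0 by (simp add: isperm_def)
      show ?thesis using rkl_props[OF d] l unfolding P_def by simp
    qed
    moreover have "map (drop (t - s)) F \<in> Q"
    proof -
      have "drop (t - s) y \<in> D" if "y \<in> set F" for y
      proof -
        obtain m where m: "m < length F" "y = F ! m" using \<open>y \<in> set F\<close> by (auto simp: in_set_conv_nth)
        have "isperm y t" using LF(2)[OF F(1)] m len k_def by simp
        hence "length y = t" "distinct y" "set y = {0..<t}" by (auto simp: isperm_def)
        thus ?thesis unfolding D_def using assms(2) set_drop_subset[of "t - s" y]
          by (auto simp: distinct_drop)
      qed
      thus ?thesis unfolding Q_def using len by auto
    qed
    ultimately show "x \<in> P \<times> Q" using F(2) unfolding \<Phi>_def by simp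
  qed
  have inj: "inj_on \<Phi> (LRM s t n)"
  proof (rule inj_onI)
    fix F F' assume F: "F \<in> LRM s t n" and F': "F' \<in> LRM s t n" and e: "\<Phi> F = \<Phi> F'"
    have len: "length F = k" "length F' = k" using LF(1)[OF F] LF(1)[OF F'] k_def by auto
    have e1: "rkl (take (t - s) (F ! 0)) = rkl (take (t - s) (F' ! 0))" using e unfolding \<Phi>_def by simp
    have e2: "map (drop (t - s)) F = map (drop (t - s)) F'" using e unfolding \<Phi>_def by simp
    have dr: "drop (t - s) (F ! m) = drop (t - s) (F' ! m)" if "m < k" for m
      using arg_cong[OF e2, of "\<lambda>L. L ! m"] that len by simp
    have pm: "isperm (F ! m) t" "isperm (F' ! m) t" if "m < k" for m
      using LF(2)[OF F] LF(2)[OF F'] that k_def by auto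
    have "m < k \<longrightarrow> F ! m = F' ! m" for m
    proof (induction m)
      case 0
      show ?case using reconstruct[OF pm(1)[of 0] pm(2)[of 0] e1 dr[of 0]] by simp
    next
      case (Suc m)
      show ?case
      proof
        assume m: "Suc m < k"
        hence "F ! m = F' ! m" using Suc by simp
        hence "rkl (take (t - s) (F ! Suc m)) = rkl (take (t - s) (F' ! Suc m))"
          using LF(3)[OF F, of m] LF(3)[OF F', of m] m k_def by simp
        thus "F ! Suc m = F' ! Suc m"
          using reconstruct[OF pm(1)[OF m] pm(2)[OF m] _ dr[OF m]] by simp
      qed
    qed
    thus "F = F'" using len by (intro nth_equalityI) auto
  qed
  have finL: "finite (LRM s t n)"
    using finite_imageD[OF finite_subset[OF img] inj] finP finQ by simp
  have c1: "card (LRM s t n) \<le> card P * card Q"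
    using card_inj_on_le[OF inj img] finP finQ by (simp add: card_cartesian_product)
  have cP: "card P = fact (t - s)"
  proof -
    have "card P = \<Prod>{card {0..<t-s} - (t - s) + 1 .. card {0..<t-s}}"
      unfolding P_def by (rule card_lists_distinct_length_eq) auto
    thus ?thesis by (simp add: fact_prod)
  qed
  have cD: "card D = \<Prod>{Suc (t - s)..t}"
  proof -
    have "card D = \<Prod>{card {0..<t} - s + 1 .. card {0..<t}}"
      unfolding D_def by (rule card_lists_distinct_length_eq) (auto simp: assms(2))
    thus ?thesis using assms(2) by (simp add: Suc_diff_le)
  qed
  have cQ: "card Q = card D ^ k" unfolding Q_def using card_lists_length_eq[OF finD] .
  have ft: "(fact t :: real) = fact (t - s) * real (\<Prod>{Suc (t - s)..t})"
  proof -
    have "(fact t :: nat) = fact (t - s) * \<Prod>{Suc (t - s)..t}"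
      by (rule fact_eq_fact_times) simp
    hence "real (fact t) = real (fact (t - s) * \<Prod>{Suc (t - s)..t})" by simp
    thus ?thesis by (simp add: of_nat_fact)
  qed
  have q: "(fact t / fact (t - s) :: real) = real (card D)"
    using ft cD by simp
  have part2: "real (card (LRM s t n)) \<le> fact (t - s) * (fact t / fact (t - s)) ^ (n div s)"
  proof -
    have "real (card (LRM s t n)) \<le> real (card P * card Q)" using c1 by linarith
    also have "\<dots> = fact (t - s) * (fact t / fact (t - s)) ^ (n div s)"
      using cP cQ q k_def by (simp add: of_nat_fact)
    finally show ?thesis .
  qed
  have bar: "LRM_bar s t n = map (top_digits s) ` LRM s t n"
    unfolding LRM_bar_def LRM_def by (auto simp: image_def)
  have part1: "card (LRM_bar s t n) \<le> card (LRM s t n)"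
    unfolding bar by (rule card_image_le[OF finL])
  show ?thesis using part1 part2 by simp
qed

end
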